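(* Let $M\subseteq\mathbb{N}$ and let $L$ be the class of all partial functions from $\mathbb{N}^k$ to $\mathbb{N}$ (all arities $k\ge1$) whose graphs are enumeration reducible to $M$. Assume $L$ satisfies: (1) $L$ contains all partial recursive functions and is closed under substitution, primitive recursion and the $\mu$-operator; (2) for every unary function $f\in L$ there exist a set $R\subseteq\mathbb{N}$ and unary functions $\alpha,\omega\in L$ whose domains contain $R$, such that the indicator function of $R$ belongs to $L$, and for all $x,y$, $f(x)$ is defined and equals $y$ iff there is $m\in R$ with $\alpha(m)=x$ and $\omega(m)=y$; (3) there exists a binary function $F\in L$ such that for every unary $f\in L$ there is $n$ with $F(n,\cdot)=f$. Then there exists a set $S\subseteq\mathbb{N}$ such that $M$ is enumeration equivalent to $S\oplus\overline{S}$, i.e., $M$ is enumeration reducible to $S\oplus\overline S$ and $S\oplus\overline S$ is enumeration reducible to $M$.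
   Context: Fix a standard recursive bijective encoding of tuples of natural numbers by natural numbers. The graph of a partial function $g:\mathbb{N}^k\to\mathbb{N}$ is the set of codes of tuples $(x_1,\dots,x_k,y)$ with $g(x_1,\dots,x_k)=y$. For $X,Y\subseteq\mathbb{N}$, $X$ is enumeration reducible to $Y$ if there is a recursively enumerable set $W$ of pairs $(x,u)$ such that $x\in X$ iff there is $u$ with $(x,u)\in W$ and $D_u\subseteq Y$, where $D_u$ is the finite set with canonical index $u$. $\overline S=\mathbb{N}\setminus S$, and $A\oplus B=\{2n\mid n\in A\}\cup\{2n+1\mid n\in B\}$. *)

theory Defs
  imports Main "HOL-Library.Nat_Bijection"
begin

datatype recf = Zero | Succ | Proj nat | Comp recf "recf list" | Prim recf recf | Mn recf

inductive eval :: "recf \<Rightarrow> nat list \<Rightarrow> nat \<Rightarrow> bool" where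
  zero: "eval Zero xs 0"
| succ: "eval Succ (x # xs) (Suc x)"
| proj: "i < length xs \<Longrightarrow> eval (Proj i) xs (xs ! i)"
| comp: "list_all2 (\<lambda>g y. eval g xs y) gs ys \<Longrightarrow> eval f ys z \<Longrightarrow> eval (Comp f gs) xs z"
| prim0: "eval f xs y \<Longrightarrow> eval (Prim f g) (0 # xs) y"
| primS: "eval (Prim f g) (n # xs) y \<Longrightarrow> eval g (n # y # xs) z \<Longrightarrow> eval (Prim f g) (Suc n # xs) z"
| mn: "eval f (y # xs) 0 \<Longrightarrow> (\<forall>i<y. \<exists>z. z \<noteq> 0 \<and> eval f (i # xs) z) \<Longrightarrow> eval (Mn f) xs y"

text \<open>Partial functions are modelled as nat list => nat option; a k-ary partial function
  only matters on lists of length k.\<close>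

type_synonym pfun = "nat list \<Rightarrow> nat option"

definition pr_fun :: "recf \<Rightarrow> pfun" where
  "pr_fun r xs = (if \<exists>y. eval r xs y then Some (THE y. eval r xs y) else None)"

definition re_set :: "nat set \<Rightarrow> bool" where
  "re_set W \<longleftrightarrow> (\<exists>r. W = {x. \<exists>y. eval r [x] y})"

text \<open>Canonical finite set with index u: D_u = set_decode u.  Pairs coded by prod_encode.\<close>

definition e_reducible :: "nat set \<Rightarrow> nat set \<Rightarrow> bool" where
  "e_reducible X Y \<longleftrightarrow> (\<exists>W. re_set W \<and>
     (\<forall>x. x \<in> X \<longleftrightarrow> (\<exists>u. prod_encode (x, u) \<in> W \<and> set_decode u \<subseteq> Y)))"

definition join :: "nat set \<Rightarrow> nat set \<Rightarrow> nat set" where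
  "join A B = {2 * n | n. n \<in> A} \<union> {2 * n + 1 | n. n \<in> B}"

definition graph :: "nat \<Rightarrow> pfun \<Rightarrow> nat set" where
  "graph k f = {list_encode (xs @ [y]) | xs y. length xs = k \<and> f xs = Some y}"

definition inL :: "nat set \<Rightarrow> nat \<Rightarrow> pfun \<Rightarrow> bool" where
  "inL M k f \<longleftrightarrow> k \<ge> 1 \<and> e_reducible (graph k f) M"

definition subst :: "pfun \<Rightarrow> pfun list \<Rightarrow> pfun" where
  "subst f gs xs = (if \<forall>g\<in>set gs. g xs \<noteq> None then f (map (\<lambda>g. the (g xs)) gs) else None)"

fun prec :: "pfun \<Rightarrow> pfun \<Rightarrow> nat list \<Rightarrow> nat option" where
  "prec f g [] = None"
| "prec f g (0 # xs) = f xs"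
| "prec f g (Suc n # xs) = (case prec f g (n # xs) of None \<Rightarrow> None | Some y \<Rightarrow> g (n # y # xs))"

definition mu :: "pfun \<Rightarrow> pfun" where
  "mu f xs = (if \<exists>y. f (y # xs) = Some 0 \<and> (\<forall>i<y. \<exists>z. f (i # xs) = Some (Suc z))
              then Some (THE y. f (y # xs) = Some 0 \<and> (\<forall>i<y. \<exists>z. f (i # xs) = Some (Suc z)))
              else None)"

definition indicator_fn :: "nat set \<Rightarrow> pfun" where
  "indicator_fn R xs = Some (if hd xs \<in> R then 1 else 0)"

end

theory Submission
  imports Defs
begin

inductive_cases evZ: "eval Zero xs y"
inductive_cases evS: "eval Succ xs y"
inductive_cases evP: "eval (Proj i) xs y"
inductive_cases evC: "eval (Comp f gs) xs y"
inductive_cases evPr: "eval (Prim f g) xs y"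
inductive_cases evM: "eval (Mn f) xs y"

lemma eval_det: "eval r xs y \<Longrightarrow> eval r xs y' \<Longrightarrow> y = y'"
proof (induction r xs y arbitrary: y' rule: eval.induct)
  case (zero xs) then show ?case by (blast elim: evZ)
next
  case (succ x xs) then show ?case by (blast elim: evS)
next
  case (proj i xs) then show ?case by (blast elim: evP)
next
  case (comp xs gs ys f z)
  from comp.prems obtain ys' where a: "list_all2 (\<lambda>g y. eval g xs y) gs ys'" and b: "eval f ys' y'"
    by (blast elim: evC)
  have "ys = ys'" using comp(1) a
  proof (induction gs arbitrary: ys ys')
    case Nil then show ?case by simp
  next
    case (Cons g gs)
    then obtain y ys0 y1 ys1 where e: "ys = y # ys0" "ys' = y1 # ys1" by (simp add: list_all2_Cons1) blast
    have h1: "eval g xs y \<and> (\<forall>y'. eval g xs y' \<longrightarrow> y = y')" "list_all2 (\<lambda>g y. eval g xs y \<and> (\<forall>y'. eval g xs y' \<longrightarrow> y = y')) gs ys0"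
      using Cons.prems(1) e by simp_all
    have h2: "eval g xs y1" "list_all2 (\<lambda>g y. eval g xs y) gs ys1" using Cons.prems(2) e by simp_all
    have "ys0 = ys1" using Cons.IH[OF h1(2) h2(2)] .
    then show ?case using h1(1) h2(1) e by simp
  qed
  then show ?case using comp(2) b by simp
next
  case (prim0 f xs y g)
  from prim0.prems have "eval f xs y'" by (blast elim: evPr)
  then show ?case using prim0 by simp
next
  case (primS f g n xs y z)
  from primS.prems obtain y1 where "eval (Prim f g) (n # xs) y1" "eval g (n # y1 # xs) y'"
    by (blast elim: evPr)
  then show ?case using primS by metis
next
  case (mn f y xs)
  from mn.prems have p1: "eval f (y' # xs) 0" and p2: "\<forall>i<y'. \<exists>z. z \<noteq> 0 \<and> eval f (i # xs) z"
    by (blast elim: evM)+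
  show ?case
  proof (rule ccontr)
    assume "y \<noteq> y'"
    then consider "y < y'" | "y' < y" by linarith
    then show False
    proof cases
      case 1 then obtain z where "z \<noteq> 0" "eval f (y # xs) z" using p2 by blast
      then show False using mn(2) by blast
    next
      case 2 then obtain z where "z \<noteq> 0" "eval f (y' # xs) z" "\<forall>w. eval f (y' # xs) w \<longrightarrow> z = w" using mn(3) by blast
      then show False using p1 by blast
    qed
  qed
qed
definition tr :: "nat \<Rightarrow> (nat list \<Rightarrow> nat) \<Rightarrow> bool" where
  "tr k h \<longleftrightarrow> (\<exists>r. \<forall>xs. length xs = k \<longrightarrow> eval r xs (h xs))"

lemma tr_cong: "tr k h \<Longrightarrow> (\<And>xs. length xs = k \<Longrightarrow> h xs = h' xs) \<Longrightarrow> tr k h'"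
  unfolding tr_def by metis

fun cn :: "nat \<Rightarrow> recf" where
  "cn 0 = Zero" | "cn (Suc c) = Comp Succ [cn c]"

lemma eval_cn: "eval (cn c) xs c"
  by (induction c) (auto intro!: eval.intros)

lemma tr_const: "tr k (\<lambda>_. c)"
  unfolding tr_def using eval_cn by blast

lemma tr_proj: "i < k \<Longrightarrow> tr k (\<lambda>xs. xs ! i)"
  unfolding tr_def by (auto intro!: exI[of _ "Proj i"] eval.intros)

lemma tr_list: "\<forall>g\<in>set gs. tr k g \<Longrightarrow>
  \<exists>rs. \<forall>xs. length xs = k \<longrightarrow> list_all2 (\<lambda>r y. eval r xs y) rs (map (\<lambda>g. g xs) gs)"
proof (induction gs)
  case Nil then show ?case by auto
next
  case (Cons g gs)
  then obtain rs where rs: "\<forall>xs. length xs = k \<longrightarrow> list_all2 (\<lambda>r y. eval r xs y) rs (map (\<lambda>g. g xs) gs)" by auto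
  from Cons.prems obtain r where "\<forall>xs. length xs = k \<longrightarrow> eval r xs (g xs)" unfolding tr_def by auto
  with rs show ?case by (auto intro!: exI[of _ "r # rs"])
qed

lemma tr_comp: "tr m f \<Longrightarrow> length gs = m \<Longrightarrow> \<forall>g\<in>set gs. tr k g \<Longrightarrow> tr k (\<lambda>xs. f (map (\<lambda>g. g xs) gs))"
proof -
  assume f: "tr m f" and l: "length gs = m" and g: "\<forall>g\<in>set gs. tr k g"
  from tr_list[OF g] obtain rs where rs: "\<forall>xs. length xs = k \<longrightarrow> list_all2 (\<lambda>r y. eval r xs y) rs (map (\<lambda>g. g xs) gs)" by auto
  from f obtain rf where rf: "\<forall>xs. length xs = m \<longrightarrow> eval rf xs (f xs)" unfolding tr_def by auto
  show ?thesis unfolding tr_def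
    by (rule exI[of _ "Comp rf rs"]) (use rs rf l in \<open>auto intro!: eval.comp\<close>)
qed

lemma tr_comp1: "tr 1 f \<Longrightarrow> tr k g \<Longrightarrow> tr k (\<lambda>xs. f [g xs])"
  using tr_comp[of 1 f "[g]" k] by simp
lemma tr_comp2: "tr 2 f \<Longrightarrow> tr k g \<Longrightarrow> tr k g2 \<Longrightarrow> tr k (\<lambda>xs. f [g xs, g2 xs])"
  using tr_comp[of 2 f "[g,g2]" k] by simp
lemma tr_comp3: "tr 3 f \<Longrightarrow> tr k g \<Longrightarrow> tr k g2 \<Longrightarrow> tr k g3 \<Longrightarrow> tr k (\<lambda>xs. f [g xs, g2 xs, g3 xs])"
  using tr_comp[of 3 f "[g,g2,g3]" k] by simp

fun prr :: "(nat list \<Rightarrow> nat) \<Rightarrow> (nat list \<Rightarrow> nat) \<Rightarrow> nat list \<Rightarrow> nat" where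
  "prr f g [] = 0"
| "prr f g (0 # xs) = f xs"
| "prr f g (Suc n # xs) = g (n # prr f g (n # xs) # xs)"

lemma tr_prim: "tr k f \<Longrightarrow> tr (k + 2) g \<Longrightarrow> tr (k + 1) (prr f g)"
proof -
  assume "tr k f" "tr (k + 2) g"
  then obtain rf rg where rf: "\<forall>xs. length xs = k \<longrightarrow> eval rf xs (f xs)"
    and rg: "\<forall>xs. length xs = k + 2 \<longrightarrow> eval rg xs (g xs)" unfolding tr_def by auto
  have "eval (Prim rf rg) (n # xs) (prr f g (n # xs))" if "length xs = k" for n xs
    using that by (induction n) (auto intro!: eval.intros rf[rule_format] rg[rule_format])
  then show ?thesis unfolding tr_def
    by (intro exI[of _ "Prim rf rg"]) (auto simp: length_Suc_conv)
qed


lemma tr_suc: "tr k a \<Longrightarrow> tr k (\<lambda>xs. Suc (a xs))"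
proof -
  assume "tr k a" then obtain r where r: "\<forall>xs. length xs = k \<longrightarrow> eval r xs (a xs)" unfolding tr_def by auto
  show ?thesis unfolding tr_def
    by (rule exI[of _ "Comp Succ [r]"]) (auto intro!: eval.intros r[rule_format])
qed

lemma len1: "length xs = Suc k \<Longrightarrow> \<exists>n ys. xs = n # ys \<and> length ys = k"
  by (cases xs) auto

lemma tr_primI:
  assumes "tr k f" "tr (k + 2) g" "\<And>n ys. length ys = k \<Longrightarrow> prr f g (n # ys) = h (n # ys)"
  shows "tr (Suc k) h"
proof -
  have "tr (Suc k) (prr f g)" using tr_prim[OF assms(1,2)] by simp
  then show ?thesis by (rule tr_cong) (use assms(3) len1 in fastforce)
qed

lemma add0: "tr 2 (\<lambda>xs. xs!0 + xs!1)"
proof -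
  have "tr (Suc 1) (\<lambda>xs. xs!0 + xs!1)"
  proof (rule tr_primI[where f="\<lambda>xs. xs!0" and g="\<lambda>xs. Suc (xs!1)"])
    show "tr 1 (\<lambda>xs. xs!0)" by (rule tr_proj) simp
    show "tr (1+2) (\<lambda>xs. Suc (xs!1))" by (intro tr_suc tr_proj) simp
    fix n ys show "prr (\<lambda>xs. xs!0) (\<lambda>xs. Suc (xs!1)) (n # ys) = (n # ys)!0 + (n#ys)!1"
      by (induction n) auto
  qed
  then show ?thesis by (simp add: numeral_2_eq_2)
qed

lemma tr_add: "tr k a \<Longrightarrow> tr k b \<Longrightarrow> tr k (\<lambda>xs. a xs + b xs)"
  using tr_comp2[OF add0] by simp

lemma mult0: "tr 2 (\<lambda>xs. xs!0 * xs!1)"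
proof -
  have "tr (Suc 1) (\<lambda>xs. xs!0 * xs!1)"
  proof (rule tr_primI[where f="\<lambda>xs. 0" and g="\<lambda>xs. xs!1 + xs!2"])
    show "tr 1 (\<lambda>xs. 0)" by (rule tr_const)
    show "tr (1+2) (\<lambda>xs. xs!1 + xs!2)" by (intro tr_add tr_proj) simp_all
    fix n ys show "prr (\<lambda>xs. 0) (\<lambda>xs. xs!1 + xs!2) (n # ys) = (n # ys)!0 * (n#ys)!1"
      by (induction n) auto
  qed
  then show ?thesis by (simp add: numeral_2_eq_2)
qed

lemma tr_mult: "tr k a \<Longrightarrow> tr k b \<Longrightarrow> tr k (\<lambda>xs. a xs * b xs)"
  using tr_comp2[OF mult0] by simp

lemma pred0: "tr 1 (\<lambda>xs. xs!0 - 1)"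
proof -
  have "tr (Suc 0) (\<lambda>xs. xs!0 - 1)"
  proof (rule tr_primI[where f="\<lambda>xs. 0" and g="\<lambda>xs. xs!0"])
    show "tr 0 (\<lambda>xs. 0)" by (rule tr_const)
    show "tr (0+2) (\<lambda>xs. xs!0)" by (intro tr_proj) simp_all
    fix n ys show "prr (\<lambda>xs. 0) (\<lambda>xs. xs!0) (n # ys) = (n # ys)!0 - 1"
      by (cases n) auto
  qed
  then show ?thesis by simp
qed

lemma tr_pred: "tr k a \<Longrightarrow> tr k (\<lambda>xs. a xs - 1)"
  using tr_comp1[OF pred0] by simp

lemma sub0: "tr 2 (\<lambda>xs. xs!1 - xs!0)"
proof -
  have "tr (Suc 1) (\<lambda>xs. xs!1 - xs!0)"
  proof (rule tr_primI[where f="\<lambda>xs. xs!0" and g="\<lambda>xs. xs!1 - 1"])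
    show "tr 1 (\<lambda>xs. xs!0)" by (rule tr_proj) simp
    show "tr (1+2) (\<lambda>xs. xs!1 - 1)" by (intro tr_pred tr_proj) simp_all
    fix n ys show "prr (\<lambda>xs. xs!0) (\<lambda>xs. xs!1 - 1) (n # ys) = (n # ys)!1 - (n#ys)!0"
      by (induction n) auto
  qed
  then show ?thesis by (simp add: numeral_2_eq_2)
qed

lemma tr_sub: "tr k a \<Longrightarrow> tr k b \<Longrightarrow> tr k (\<lambda>xs. a xs - b xs)"
  using tr_comp2[OF sub0, of k b a] by simp

lemma pow0: "tr 1 (\<lambda>xs. 2 ^ (xs!0))"
proof -
  have "tr (Suc 0) (\<lambda>xs. 2 ^ (xs!0))"
  proof (rule tr_primI[where f="\<lambda>xs. 1" and g="\<lambda>xs. xs!1 + xs!1"])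
    show "tr 0 (\<lambda>xs. 1)" by (rule tr_const)
    show "tr (0+2) (\<lambda>xs. xs!1 + xs!1)" by (intro tr_add tr_proj) simp_all
    fix n ys show "prr (\<lambda>xs. 1) (\<lambda>xs. xs!1 + xs!1) (n # ys) = 2 ^ ((n # ys)!0)"
      by (induction n) auto
  qed
  then show ?thesis by simp
qed

lemma tr_pow: "tr k a \<Longrightarrow> tr k (\<lambda>xs. 2 ^ a xs)"
  using tr_comp1[OF pow0] by simp

lemma tri0: "tr 1 (\<lambda>xs. triangle (xs!0))"
proof -
  have "tr (Suc 0) (\<lambda>xs. triangle (xs!0))"
  proof (rule tr_primI[where f="\<lambda>xs. 0" and g="\<lambda>xs. xs!1 + Suc (xs!0)"])
    show "tr 0 (\<lambda>xs. 0)" by (rule tr_const)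
    show "tr (0+2) (\<lambda>xs. xs!1 + Suc (xs!0))" by (intro tr_add tr_suc tr_proj) simp_all
    fix n ys show "prr (\<lambda>xs. 0) (\<lambda>xs. xs!1 + Suc (xs!0)) (n # ys) = triangle ((n # ys)!0)"
      by (induction n) auto
  qed
  then show ?thesis by simp
qed

lemma tr_tri: "tr k a \<Longrightarrow> tr k (\<lambda>xs. triangle (a xs))"
  using tr_comp1[OF tri0] by simp

lemma tr_pe: "tr k a \<Longrightarrow> tr k b \<Longrightarrow> tr k (\<lambda>xs. prod_encode (a xs, b xs))"
  unfolding prod_encode_def by (simp add: tr_add tr_tri)

lemma mod0: "tr 1 (\<lambda>xs. xs!0 mod 2)"
proof -
  have "tr (Suc 0) (\<lambda>xs. xs!0 mod 2)"
  proof (rule tr_primI[where f="\<lambda>xs. 0" and g="\<lambda>xs. 1 - xs!1"])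
    show "tr 0 (\<lambda>xs. 0)" by (rule tr_const)
    show "tr (0+2) (\<lambda>xs. 1 - xs!1)" by (intro tr_sub tr_const tr_proj) simp_all
    fix n ys show "prr (\<lambda>xs. 0) (\<lambda>xs. 1 - xs!1) (n # ys) = (n # ys)!0 mod 2"
      by (induction n) (auto simp: mod_Suc)
  qed
  then show ?thesis by simp
qed

lemma tr_mod2: "tr k a \<Longrightarrow> tr k (\<lambda>xs. a xs mod 2)"
  using tr_comp1[OF mod0] by simp

lemma div0: "tr 1 (\<lambda>xs. xs!0 div 2)"
proof -
  have "tr (Suc 0) (\<lambda>xs. xs!0 div 2)"
  proof (rule tr_primI[where f="\<lambda>xs. 0" and g="\<lambda>xs. xs!1 + xs!0 mod 2"])
    show "tr 0 (\<lambda>xs. 0)" by (rule tr_const)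
    show "tr (0+2) (\<lambda>xs. xs!1 + xs!0 mod 2)" by (intro tr_add tr_mod2 tr_proj) simp_all
    fix n ys show "prr (\<lambda>xs. 0) (\<lambda>xs. xs!1 + xs!0 mod 2) (n # ys) = (n # ys)!0 div 2"
      by (induction n) (auto simp: div_Suc mod_Suc)
  qed
  then show ?thesis by simp
qed

lemma tr_div2: "tr k a \<Longrightarrow> tr k (\<lambda>xs. a xs div 2)"
  using tr_comp1[OF div0] by simp

fun sq :: "nat \<Rightarrow> nat" where
  "sq 0 = 0" | "sq (Suc n) = sq n + (1 - (triangle (sq n + 1) - (n + 1)))"

lemma sq_bounds: "triangle (sq p) \<le> p \<and> p < triangle (sq p + 1)"
proof (induction p)
  case 0 then show ?case by simp
next
  case (Suc p)
  show ?case
  proof (cases "triangle (sq p + 1) \<le> p + 1")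
    case True
    then have "triangle (sq p + 1) = p + 1" using Suc by linarith
    then show ?thesis using True by simp
  next
    case False
    then show ?thesis using Suc by simp
  qed
qed

lemma sq0: "tr 1 (\<lambda>xs. sq (xs!0))"
proof -
  have "tr (Suc 0) (\<lambda>xs. sq (xs!0))"
  proof (rule tr_primI[where f="\<lambda>xs. 0" and g="\<lambda>xs. xs!1 + (1 - (triangle (xs!1 + 1) - (xs!0 + 1)))"])
    show "tr 0 (\<lambda>xs. 0)" by (rule tr_const)
    show "tr (0+2) (\<lambda>xs. xs!1 + (1 - (triangle (xs!1 + 1) - (xs!0 + 1))))"
      by (intro tr_add tr_sub tr_tri tr_const tr_proj) simp_all
    fix n ys show "prr (\<lambda>xs. 0) (\<lambda>xs. xs!1 + (1 - (triangle (xs!1 + 1) - (xs!0 + 1)))) (n # ys) = sq ((n # ys)!0)"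
      by (induction n) auto
  qed
  then show ?thesis by simp
qed

lemma tr_sq: "tr k a \<Longrightarrow> tr k (\<lambda>xs. sq (a xs))"
  using tr_comp1[OF sq0] by simp

lemma decode_sq: "prod_decode p = (p - triangle (sq p), sq p - (p - triangle (sq p)))"
proof -
  have b: "triangle (sq p) \<le> p" "p < triangle (sq p) + sq p + 1" using sq_bounds[of p] by auto
  have "prod_encode (p - triangle (sq p), sq p - (p - triangle (sq p))) = p"
    unfolding prod_encode_def using b by (simp add: add.commute)
  then show ?thesis by (metis prod_encode_inverse)
qed

lemma tr_fst: "tr k a \<Longrightarrow> tr k (\<lambda>xs. fst (prod_decode (a xs)))"
  unfolding decode_sq by (simp, intro tr_sub tr_tri tr_sq)

lemma tr_snd: "tr k a \<Longrightarrow> tr k (\<lambda>xs. snd (prod_decode (a xs)))"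
  unfolding decode_sq by (simp, intro tr_sub tr_tri tr_sq)


lemma tr_le2: "tr k a \<Longrightarrow> tr k b \<Longrightarrow> tr k (\<lambda>xs. list_encode [a xs, b xs])"
  by (simp, intro tr_suc tr_pe tr_const)

lemma tr_le3: "tr k a \<Longrightarrow> tr k b \<Longrightarrow> tr k c \<Longrightarrow> tr k (\<lambda>xs. list_encode [a xs, b xs, c xs])"
  by (simp, intro tr_suc tr_pe tr_const)

lemma tr_dist: "tr k a \<Longrightarrow> tr k b \<Longrightarrow> tr k (\<lambda>xs. (a xs - b xs) + (b xs - a xs))"
  by (intro tr_add tr_sub)

lemma dist0: "((a::nat) - b) + (b - a) = 0 \<longleftrightarrow> a = b" by auto

lemma re_search: "tr 2 g \<Longrightarrow> re_set {p. \<exists>x. g [x,p] = 0}"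
proof -
  assume "tr 2 g"
  then obtain r where r: "\<And>xs. length xs = 2 \<Longrightarrow> eval r xs (g xs)" unfolding tr_def by auto
  have *: "(\<exists>y. eval (Mn r) [p] y) \<longleftrightarrow> (\<exists>x. g [x,p] = 0)" for p
  proof
    assume "\<exists>y. eval (Mn r) [p] y"
    then obtain y where h: "eval (Mn r) [p] y" by blast
    have e1: "eval r [y,p] 0" using h by (blast elim: evM)
    have e2: "eval r [y,p] (g [y,p])" by (rule r) simp
    have "g [y,p] = 0" using eval_det[OF e1 e2] by simp
    then show "\<exists>x. g [x,p] = 0" by blast
  next
    assume ex: "\<exists>x. g [x,p] = 0"
    define y where "y = (LEAST x. g [x,p] = 0)"
    have y0: "g [y,p] = 0" unfolding y_def using LeastI_ex[OF ex] .
    have yl: "\<forall>i<y. g [i,p] \<noteq> 0" unfolding y_def using not_less_Least[where P="\<lambda>x. g [x,p] = 0"] by blast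
    have "eval (Mn r) [p] y"
    proof (rule eval.mn)
      show "eval r [y, p] 0" using r[of "[y,p]"] y0 by simp
      show "\<forall>i<y. \<exists>z. z \<noteq> 0 \<and> eval r [i, p] z"
        using yl r by (metis length_Cons list.size(3) numeral_2_eq_2)
    qed
    then show "\<exists>y. eval (Mn r) [p] y" by blast
  qed
  show ?thesis unfolding re_set_def by (rule exI[of _ "Mn r"]) (use * in blast)
qed

lemma re_pre: "re_set W \<Longrightarrow> tr 1 h \<Longrightarrow> re_set {x. h [x] \<in> W}"
proof -
  assume "re_set W" "tr 1 h"
  then obtain r rh where W: "W = {x. \<exists>y. eval r [x] y}"
    and rh: "\<And>xs. length xs = 1 \<Longrightarrow> eval rh xs (h xs)" unfolding tr_def re_set_def by auto
  have *: "(\<exists>y. eval (Comp r [rh]) [x] y) \<longleftrightarrow> (\<exists>y. eval r [h [x]] y)" for x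
  proof
    assume "\<exists>y. eval (Comp r [rh]) [x] y"
    then obtain y where "eval (Comp r [rh]) [x] y" by blast
    then obtain ys where a: "list_all2 (\<lambda>g y. eval g [x] y) [rh] ys" "eval r ys y" by (blast elim: evC)
    then obtain z where "ys = [z]" "eval rh [x] z" by (auto simp: list_all2_Cons1)
    have "eval rh [x] (h [x])" by (rule rh) simp
    then have "z = h [x]" using eval_det \<open>eval rh [x] z\<close> by blast
    then show "\<exists>y. eval r [h [x]] y" using a \<open>ys = [z]\<close> by blast
  next
    assume "\<exists>y. eval r [h [x]] y"
    then obtain y where "eval r [h [x]] y" by blast
    moreover have "list_all2 (\<lambda>g y. eval g [x] y) [rh] [h [x]]" using rh[of "[x]"] by simp
    ultimately show "\<exists>y. eval (Comp r [rh]) [x] y" by (blast intro: eval.comp)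
  qed
  show ?thesis unfolding re_set_def W by (rule exI[of _ "Comp r [rh]"]) (use * in blast)
qed

lemma ered_pre:
  assumes "e_reducible X Y" "tr 1 h" "\<And>z. z \<in> Z \<longleftrightarrow> h [z] \<in> X"
  shows "e_reducible Z Y"
proof -
  from assms(1) obtain W where W: "re_set W"
    "\<And>x. x \<in> X \<longleftrightarrow> (\<exists>u. prod_encode (x, u) \<in> W \<and> set_decode u \<subseteq> Y)"
    unfolding e_reducible_def by blast
  define h' where "h' = (\<lambda>xs. prod_encode (h [fst (prod_decode (xs!0))], snd (prod_decode (xs!0))))"
  have "tr 1 h'" unfolding h'_def
    by (intro tr_pe tr_fst tr_snd tr_comp1[OF assms(2)] tr_proj) simp_all
  then have re: "re_set {x. h' [x] \<in> W}" by (rule re_pre[OF W(1)])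
  show ?thesis unfolding e_reducible_def
  proof (intro exI conjI allI)
    show "re_set {x. h' [x] \<in> W}" by (rule re)
    fix z show "z \<in> Z \<longleftrightarrow> (\<exists>u. prod_encode (z, u) \<in> {x. h' [x] \<in> W} \<and> set_decode u \<subseteq> Y)"
      unfolding assms(3) W(2) by (simp add: h'_def)
  qed
qed

lemma join_iff: "z \<in> join A B \<longleftrightarrow> (even z \<and> z div 2 \<in> A) \<or> (odd z \<and> z div 2 \<in> B)"
  unfolding join_def by auto

lemma graph_mem: "list_encode (xs @ [y]) \<in> graph k f \<longleftrightarrow> length xs = k \<and> f xs = Some y"
  unfolding graph_def by (auto simp: list_encode_eq)

lemma sd_pow: "set_decode (2 ^ x) = {x}"
  using set_encode_inverse[of "{x}"] by simp

lemma graph_cong: assumes "(\<And>xs. length xs = k \<Longrightarrow> f xs = f' xs)" shows "graph k f = graph k f'"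
proof -
  have e: "\<And>xs y. (length xs = k \<and> f xs = Some y) = (length xs = k \<and> f' xs = Some y)" using assms by auto
  show ?thesis unfolding graph_def by (simp only: e)
qed

lemma inL_cong: "inL M k f \<Longrightarrow> (\<And>xs. length xs = k \<Longrightarrow> f xs = f' xs) \<Longrightarrow> inL M k f'"
  unfolding inL_def using graph_cong by metis

lemma Lpr: "\<forall>r k. k \<ge> 1 \<longrightarrow> inL M k (pr_fun r) \<Longrightarrow> tr k h \<Longrightarrow> k \<ge> 1 \<Longrightarrow> inL M k (\<lambda>xs. Some (h xs))"
proof -
  assume c: "\<forall>r k. k \<ge> 1 \<longrightarrow> inL M k (pr_fun r)" and "tr k h" and k: "k \<ge> 1"
  then obtain r where r: "\<And>xs. length xs = k \<Longrightarrow> eval r xs (h xs)" unfolding tr_def by auto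
  have "pr_fun r xs = Some (h xs)" if "length xs = k" for xs
    unfolding pr_fun_def using r[OF that] eval_det by (auto intro!: the_equality)
  then show ?thesis using c k inL_cong by metis
qed


lemma subst1: "subst f [g] xs = (case g xs of None \<Rightarrow> None | Some v \<Rightarrow> f [v])"
  unfolding subst_def by (cases "g xs") auto

lemma subst3: "subst f [g1, g2, g3] xs = (case g1 xs of None \<Rightarrow> None | Some v1 \<Rightarrow>
   (case g2 xs of None \<Rightarrow> None | Some v2 \<Rightarrow> (case g3 xs of None \<Rightarrow> None | Some v3 \<Rightarrow> f [v1, v2, v3])))"
  unfolding subst_def by (cases "g1 xs"; cases "g2 xs"; cases "g3 xs") auto

lemma len2: "length xs = 2 \<Longrightarrow> \<exists>a b. xs = [a, b]"
  by (metis length_0_conv len1 numeral_2_eq_2 One_nat_def)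

theorem lemma2:
  fixes M :: "nat set"
  assumes contains_prf: "\<forall>r k. k \<ge> 1 \<longrightarrow> inL M k (pr_fun r)"
    and closed_subst: "\<forall>m k f gs. length gs = m \<longrightarrow> inL M m f \<longrightarrow> (\<forall>g\<in>set gs. inL M k g)
                          \<longrightarrow> inL M k (subst f gs)"
    and closed_prec: "\<forall>k f g. inL M k f \<longrightarrow> inL M (k + 2) g \<longrightarrow> inL M (k + 1) (prec f g)"
    and closed_mu: "\<forall>k f. k \<ge> 1 \<longrightarrow> inL M (k + 1) f \<longrightarrow> inL M k (mu f)"
    and repr: "\<forall>f. inL M 1 f \<longrightarrow> (\<exists>R \<alpha> \<omega>. inL M 1 \<alpha> \<and> inL M 1 \<omega>
                  \<and> (\<forall>m\<in>R. \<alpha> [m] \<noteq> None \<and> \<omega> [m] \<noteq> None)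
                  \<and> inL M 1 (indicator_fn R)
                  \<and> (\<forall>x y. f [x] = Some y \<longleftrightarrow> (\<exists>m\<in>R. \<alpha> [m] = Some x \<and> \<omega> [m] = Some y)))"
    and universal: "\<exists>F. inL M 2 F \<and> (\<forall>f. inL M 1 f \<longrightarrow> (\<exists>n. \<forall>x. F [n, x] = f [x]))"
  shows "\<exists>S. e_reducible M (join S (- S)) \<and> e_reducible (join S (- S)) M"
proof -
  define cM :: pfun where "cM = (\<lambda>xs. if hd xs \<in> M then Some 0 else None)"
  have gcM: "z \<in> graph 1 cM \<longleftrightarrow> (\<exists>x. z = list_encode [x, 0] \<and> x \<in> M)" for z
  proof
    assume "z \<in> graph 1 cM"
    then obtain xs y where "z = list_encode (xs @ [y])" "length xs = 1" "cM xs = Some y"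
      unfolding graph_def by blast
    then show "\<exists>x. z = list_encode [x, 0] \<and> x \<in> M"
      by (cases xs) (auto simp: cM_def split: if_splits)
  next
    assume "\<exists>x. z = list_encode [x, 0] \<and> x \<in> M"
    then obtain x where z: "z = list_encode [x, 0]" and x: "x \<in> M" by blast
    have "list_encode ([x] @ [0]) \<in> graph 1 cM" unfolding graph_mem using x by (simp add: cM_def)
    then show "z \<in> graph 1 cM" using z by simp
  qed
  have cM_L: "inL M 1 cM" unfolding inL_def e_reducible_def
  proof (intro conjI exI allI)
    define g where "g = (\<lambda>xs. (prod_encode (list_encode [xs!0, 0], 2 ^ (xs!0)) - xs!1) + (xs!1 - prod_encode (list_encode [xs!0, 0], 2 ^ (xs!0))))"
    have "tr 2 g" unfolding g_def by (intro tr_dist tr_pe tr_le2 tr_pow tr_proj tr_const) simp_all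
    then show "re_set {p. \<exists>x. g [x,p] = 0}" by (rule re_search)
    fix z show "z \<in> graph 1 cM \<longleftrightarrow> (\<exists>u. prod_encode (z, u) \<in> {p. \<exists>x. g [x,p] = 0} \<and> set_decode u \<subseteq> M)"
      unfolding gcM g_def by (auto simp: dist0 sd_pow)
  qed simp
  from repr[rule_format, OF cM_L] obtain R \<alpha> \<omega> where H: "inL M 1 \<alpha> \<and> inL M 1 \<omega>
                  \<and> (\<forall>m\<in>R. \<alpha> [m] \<noteq> None \<and> \<omega> [m] \<noteq> None)
                  \<and> inL M 1 (indicator_fn R)
                  \<and> (\<forall>x y. cM [x] = Some y \<longleftrightarrow> (\<exists>m\<in>R. \<alpha> [m] = Some x \<and> \<omega> [m] = Some y))"
    by (elim exE) (erule that)
  have Ra: "inL M 1 \<alpha>" using H by (rule conjunct1)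
  have Ro: "inL M 1 \<omega>" using H[THEN conjunct2] by (rule conjunct1)
  have Rdef: "\<forall>m\<in>R. \<alpha> [m] \<noteq> None \<and> \<omega> [m] \<noteq> None" using H[THEN conjunct2, THEN conjunct2] by (rule conjunct1)
  have Rind: "inL M 1 (indicator_fn R)" using H[THEN conjunct2, THEN conjunct2, THEN conjunct2] by (rule conjunct1)
  have Rrep: "\<forall>x y. cM [x] = Some y \<longleftrightarrow> (\<exists>m\<in>R. \<alpha> [m] = Some x \<and> \<omega> [m] = Some y)"
    using H[THEN conjunct2, THEN conjunct2, THEN conjunct2] by (rule conjunct2)
  define C where "C = (\<lambda>m a. m \<in> R \<and> \<alpha> [m] = Some a \<and> \<omega> [m] = Some 0)"
  define T where "T = {prod_encode (m, a) | m a. C m a}"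
  have T_iff: "prod_encode (m, a) \<in> T \<longleftrightarrow> C m a" for m a
    unfolding T_def by auto
  have M_iff: "a \<in> M \<longleftrightarrow> (\<exists>m. C m a)" for a
    using Rrep[rule_format, of a 0] unfolding C_def cM_def by (auto split: if_splits)
  show ?thesis
  proof (intro exI conjI)
    show "e_reducible M (join T (- T))" unfolding e_reducible_def
    proof (intro exI conjI allI)
      define g where "g = (\<lambda>xs. (prod_encode (snd (prod_decode (xs!0)), 2 ^ (xs!0 + xs!0)) - xs!1) + (xs!1 - prod_encode (snd (prod_decode (xs!0)), 2 ^ (xs!0 + xs!0))))"
      have "tr 2 g" unfolding g_def by (intro tr_dist tr_pe tr_snd tr_pow tr_add tr_proj) simp_all
      then show "re_set {p. \<exists>x. g [x,p] = 0}" by (rule re_search)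
      fix a
      have "(\<exists>u. prod_encode (a, u) \<in> {p. \<exists>x. g [x,p] = 0} \<and> set_decode u \<subseteq> join T (- T))
          \<longleftrightarrow> (\<exists>t. snd (prod_decode t) = a \<and> t \<in> T)"
        unfolding g_def by (auto simp: dist0 sd_pow join_iff)
      also have "\<dots> \<longleftrightarrow> (\<exists>m. C m a)"
      proof
        assume "\<exists>t. snd (prod_decode t) = a \<and> t \<in> T"
        then obtain t where "snd (prod_decode t) = a" "t \<in> T" by blast
        then show "\<exists>m. C m a" unfolding T_def by auto
      next
        assume "\<exists>m. C m a"
        then obtain m where "C m a" by blast
        then show "\<exists>t. snd (prod_decode t) = a \<and> t \<in> T"
          by (intro exI[of _ "prod_encode (m, a)"]) (simp add: T_iff)
      qed
      finally show "a \<in> M \<longleftrightarrow> (\<exists>u. prod_encode (a, u) \<in> {p. \<exists>x. g [x,p] = 0} \<and> set_decode u \<subseteq> join T (- T))"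
        using M_iff by simp
    qed
  next
    let ?P = "\<lambda>i. (\<lambda>xs. Some (xs ! i)) :: pfun"
    have LP: "inL M k (?P i)" if "i < k" for i k
      using Lpr[OF contains_prf tr_proj[OF that]] that by simp
    define E where "E = (\<lambda>xs::nat list. (1 - ((xs!0 - xs!2) + (xs!2 - xs!0))) * (1 - xs!1))"
    have LE: "inL M 3 (\<lambda>xs. Some (E xs))"
      unfolding E_def by (rule Lpr[OF contains_prf], intro tr_mult tr_sub tr_add tr_proj tr_const, simp_all)
    define A4 where "A4 = subst \<alpha> [?P 2]"
    define O4 where "O4 = subst \<omega> [?P 2]"
    define G1 where "G1 = subst (\<lambda>xs. Some (E xs)) [A4, O4, ?P 3]"
    define P0 where "P0 = ((\<lambda>xs. Some 0) :: pfun)"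
    define G' where "G' = prec P0 G1"
    define X2 where "X2 = subst (indicator_fn R) [?P 0]"
    define G0 where "G0 = subst G' [X2, ?P 0, ?P 1]"
    have CS: "inL M (length gs) f \<Longrightarrow> (\<forall>g\<in>set gs. inL M k g) \<Longrightarrow> inL M k (subst f gs)" for f gs k
      using closed_subst by blast
    have A4L: "inL M 4 A4" unfolding A4_def by (rule CS) (use Ra LP[of 2 4] in simp_all)
    have O4L: "inL M 4 O4" unfolding O4_def by (rule CS) (use Ro LP[of 2 4] in simp_all)
    have G1L: "inL M 4 G1" unfolding G1_def by (rule CS) (use LE A4L O4L LP[of 3 4] in \<open>simp_all add: numeral_3_eq_3\<close>)
    have P0L: "inL M 2 P0" unfolding P0_def by (rule Lpr[OF contains_prf tr_const]) simp
    have G'L: "inL M 3 G'" unfolding G'_def using closed_prec[rule_format, of 2 P0 G1] P0L G1L by simp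
    have X2L: "inL M 2 X2" unfolding X2_def by (rule CS) (use Rind LP[of 0 2] in simp_all)
    have LG0: "inL M 2 G0" unfolding G0_def by (rule CS) (use G'L X2L LP[of 0 2] LP[of 1 2] in \<open>simp_all add: numeral_3_eq_3\<close>)
    define G where "G = (\<lambda>xs. Some (if C (xs!0) (xs!1) then 1 else 0::nat))"
    have "G0 [m, a] = G [m, a]" for m a
    proof (cases "m \<in> R")
      case False
      then show ?thesis by (simp add: G0_def G'_def X2_def subst1 subst3 indicator_fn_def P0_def G_def C_def)
    next
      case True
      then obtain x w where xw: "\<alpha> [m] = Some x" "\<omega> [m] = Some w" using Rdef by blast
      have "G0 [m, a] = Some (E [x, w, a])"
        using True xw by (simp add: G0_def G'_def X2_def G1_def A4_def O4_def subst1 subst3 indicator_fn_def P0_def)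
      also have "\<dots> = G [m, a]" using True xw by (simp add: E_def G_def C_def; arith)
      finally show ?thesis .
    qed
    then have LG: "inL M 2 G" using inL_cong[OF LG0] len2 by metis
    then have red: "e_reducible (graph 2 G) M" unfolding inL_def by simp
    define h where "h = (\<lambda>xs. list_encode [fst (prod_decode (xs!0 div 2)), snd (prod_decode (xs!0 div 2)), 1 - xs!0 mod 2])"
    have trh: "tr 1 h" unfolding h_def by (intro tr_le3 tr_fst tr_snd tr_div2 tr_sub tr_mod2 tr_const tr_proj) simp_all
    show "e_reducible (join T (- T)) M"
    proof (rule ered_pre[OF red trh])
      fix z
      obtain m a where ma: "prod_decode (z div 2) = (m, a)" by (cases "prod_decode (z div 2)")
      then have zd: "z div 2 = prod_encode (m, a)" by (metis prod_decode_inverse)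
      have hz: "h [z] = list_encode ([m, a] @ [1 - z mod 2])" unfolding h_def using ma by simp
      have "h [z] \<in> graph 2 G \<longleftrightarrow> G [m, a] = Some (1 - z mod 2)" unfolding hz graph_mem by simp
      also have "\<dots> \<longleftrightarrow> z \<in> join T (- T)"
        unfolding join_iff zd T_iff G_def by (cases "even z") (auto simp: odd_iff_mod_2_eq_one T_iff)
      finally show "z \<in> join T (- T) \<longleftrightarrow> h [z] \<in> graph 2 G" by simp
    qed
  qed
qed

end
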